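(* Let $K$ be an infinite field containing $\mathbb{F}_q$, let $B\in\mathrm{GL}_n(K)$, and let $N\in\mathrm{GL}_n(K)$ be such that $N^{-1}BN^{(q)}=\Delta$, where $\Delta$ is the matrix with $1$'s on the subdiagonal, last column $(a_0,a_1,\dots,a_{n-1})^T$ and all other entries $0$. Then the splitting field over $K$ of the system $BX^{(q)}=X$ coincides with the splitting field over $K$ of the additive polynomial $f(Y)=Y^{q^n}-a_0Y-a_1Y^q-\cdots-a_{n-1}Y^{q^{n-1}}$.
   Context: $X^{(q)}$, $N^{(q)}$ denote entrywise $q$-th powers. The splitting field over $K$ of $BX^{(q)}=X$ is the subfield of $K_{\mathrm{sep}}$ generated over $K$ by the coordinates of all its solutions in $K_{\mathrm{sep}}^n$. *)

theory Defs
  imports "HOL-Computational_Algebra.Polynomial" "Jordan_Normal_Form.Matrix"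
begin

text \<open>All fields are subfields of an ambient algebraically closed field of type 'a.\<close>

definition is_subfield :: "'a::field set \<Rightarrow> bool" where
  "is_subfield F \<longleftrightarrow> 0 \<in> F \<and> 1 \<in> F \<and>
     (\<forall>x\<in>F. \<forall>y\<in>F. x + y \<in> F \<and> x * y \<in> F) \<and>
     (\<forall>x\<in>F. - x \<in> F) \<and> (\<forall>x\<in>F. x \<noteq> 0 \<longrightarrow> inverse x \<in> F)"

definition gen_field :: "'a::field set \<Rightarrow> 'a set" where
  "gen_field S = \<Inter>{F. is_subfield F \<and> S \<subseteq> F}"

definition separable_poly :: "'a::field poly \<Rightarrow> bool" where
  "separable_poly p \<longleftrightarrow> coprime p (pderiv p)"

definition sep_closure :: "'a::field set \<Rightarrow> 'a set" where
  "sep_closure K = {x. \<exists>p. p \<noteq> 0 \<and> (\<forall>i. coeff p i \<in> K) \<and> separable_poly p \<and> poly p x = 0}"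

definition mat_qpow :: "nat \<Rightarrow> 'a::field mat \<Rightarrow> 'a mat" where
  "mat_qpow q A = map_mat (\<lambda>x. x ^ q) A"

definition vec_qpow :: "nat \<Rightarrow> 'a::field vec \<Rightarrow> 'a vec" where
  "vec_qpow q v = map_vec (\<lambda>x. x ^ q) v"

definition Delta :: "nat \<Rightarrow> (nat \<Rightarrow> 'a::field) \<Rightarrow> 'a mat" where
  "Delta n a = mat n n (\<lambda>(i,j). if j = n - 1 then a i else if i = j + 1 then 1 else 0)"

definition add_poly :: "nat \<Rightarrow> nat \<Rightarrow> (nat \<Rightarrow> 'a::field) \<Rightarrow> 'a poly" where
  "add_poly q n a = monom 1 (q ^ n) - (\<Sum>i<n. monom (a i) (q ^ i))"

definition system_splitting_field :: "'a::field set \<Rightarrow> nat \<Rightarrow> nat \<Rightarrow> 'a mat \<Rightarrow> 'a set" where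
  "system_splitting_field K q n B =
     gen_field (K \<union> {X $ i | X i. X \<in> carrier_vec n \<and> (\<forall>j<n. X $ j \<in> sep_closure K) \<and>
                                   B *\<^sub>v vec_qpow q X = X \<and> i < n})"

definition poly_splitting_field :: "'a::field set \<Rightarrow> 'a poly \<Rightarrow> 'a set" where
  "poly_splitting_field K f = gen_field (K \<union> {y. y \<in> sep_closure K \<and> poly f y = 0})"

end

theory Submission
  imports Defs "Jordan_Normal_Form.Determinant"
begin


lemma sf_0: "is_subfield F \<Longrightarrow> 0 \<in> F" and sf_1: "is_subfield F \<Longrightarrow> 1 \<in> F"
  by (auto simp: is_subfield_def)
lemma sf_add: "is_subfield F \<Longrightarrow> x \<in> F \<Longrightarrow> y \<in> F \<Longrightarrow> x + y \<in> F"
  by (auto simp: is_subfield_def)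
lemma sf_mult: "is_subfield F \<Longrightarrow> x \<in> F \<Longrightarrow> y \<in> F \<Longrightarrow> x * y \<in> F"
  by (auto simp: is_subfield_def)
lemma sf_uminus: "is_subfield F \<Longrightarrow> x \<in> F \<Longrightarrow> - x \<in> F"
  by (auto simp: is_subfield_def)
lemma sf_inverse: "is_subfield F \<Longrightarrow> x \<in> F \<Longrightarrow> inverse x \<in> F"
  by (cases "x = 0") (auto simp: is_subfield_def)
lemma sf_diff: "is_subfield F \<Longrightarrow> x \<in> F \<Longrightarrow> y \<in> F \<Longrightarrow> x - y \<in> F"
  using sf_add[of F x "-y"] sf_uminus[of F y] by simp
lemma sf_divide: "is_subfield F \<Longrightarrow> x \<in> F \<Longrightarrow> y \<in> F \<Longrightarrow> x / y \<in> F"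
  using sf_mult[of F x "inverse y"] sf_inverse[of F y] by (simp add: divide_inverse)
lemma sf_power: "is_subfield F \<Longrightarrow> x \<in> F \<Longrightarrow> x ^ k \<in> F"
  by (induction k) (auto intro: sf_1 sf_mult)
lemma sf_sum: "is_subfield F \<Longrightarrow> (\<And>i. i \<in> A \<Longrightarrow> f i \<in> F) \<Longrightarrow> sum f A \<in> F"
  by (induction A rule: infinite_finite_induct) (auto intro: sf_0 sf_add)
lemma sf_UNIV: "is_subfield (UNIV :: 'a::field set)"
  by (auto simp: is_subfield_def)

lemma gen_field_sf: "is_subfield (gen_field S)"
  unfolding gen_field_def is_subfield_def by blast
lemma gen_field_sub: "S \<subseteq> gen_field S"
  unfolding gen_field_def by blast
lemma gen_field_min: "is_subfield F \<Longrightarrow> S \<subseteq> F \<Longrightarrow> gen_field S \<subseteq> F"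
  unfolding gen_field_def by blast

section \<open>Descent of linear dependence\<close>

definition nts :: "'a::field set \<Rightarrow> nat \<Rightarrow> 'i set \<Rightarrow> ('i \<Rightarrow> nat \<Rightarrow> 'a) \<Rightarrow> bool" where
  "nts F d I A \<longleftrightarrow> (\<exists>c. (\<forall>k<d. c k \<in> F) \<and> (\<exists>k<d. c k \<noteq> 0) \<and> (\<forall>i\<in>I. (\<Sum>k<d. A i k * c k) = 0))"

lemma hom_descent:
  fixes A :: "'i \<Rightarrow> nat \<Rightarrow> 'a::field"
  assumes "is_subfield F" "\<forall>i\<in>I. \<forall>k<d. A i k \<in> F"
    and "nts UNIV d I A \<or> (finite I \<and> card I < d)"
  shows "nts F d I A"
  using assms(2,3)
proof (induction d arbitrary: I A)
  case 0
  then show ?case by (auto simp: nts_def)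
next
  case (Suc d)
  show ?case
  proof (cases "\<forall>i\<in>I. A i 0 = 0")
    case True
    show ?thesis unfolding nts_def
      apply (rule exI[of _ "\<lambda>k. if k = 0 then 1 else 0"])
    proof (intro conjI allI impI ballI)
      fix i assume "i \<in> I"
      have "(\<Sum>k<Suc d. A i k * (if k = 0 then 1 else 0)) = (\<Sum>k<Suc d. if k = 0 then A i k else 0)"
        by (rule sum.cong) auto
      also have "\<dots> = A i 0" by (simp add: sum.delta)
      finally show "(\<Sum>k<Suc d. A i k * (if k = 0 then 1 else 0)) = 0" using True \<open>i \<in> I\<close> by simp
    qed (use assms(1) in \<open>auto simp: sf_0 sf_1\<close>)
  next
    case False
    then obtain i0 where i0: "i0 \<in> I" "A i0 0 \<noteq> 0" by blast
    define A' where "A' i k = A i (Suc k) - A i 0 / A i0 0 * A i0 (Suc k)" for i k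
    define I' where "I' = I - {i0}"
    have A'F: "\<forall>i\<in>I'. \<forall>k<d. A' i k \<in> F"
      using Suc.prems(1) i0 assms(1) unfolding A'_def I'_def
      by (auto intro!: sf_diff sf_mult sf_divide)
    have eqA': "(\<Sum>k<d. A' i k * c k) = (\<Sum>k<d. A i (Suc k) * c k) - A i 0 / A i0 0 * (\<Sum>k<d. A i0 (Suc k) * c k)" for i c
      unfolding A'_def by (simp add: algebra_simps sum_subtractf sum_distrib_left)
    have "nts UNIV d I' A' \<or> (finite I' \<and> card I' < d)"
    proof (cases "nts UNIV (Suc d) I A")
      case True
      then obtain c where c: "\<exists>k<Suc d. c k \<noteq> 0" "\<forall>i\<in>I. (\<Sum>k<Suc d. A i k * c k) = 0"
        by (auto simp: nts_def)
      have ci: "(\<Sum>k<d. A i (Suc k) * c (Suc k)) = - (A i 0 * c 0)" if "i \<in> I" for i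
        using c(2) that unfolding sum.lessThan_Suc_shift by (simp add: add_eq_0_iff)
      have sol: "\<forall>i\<in>I'. (\<Sum>k<d. A' i k * c (Suc k)) = 0"
        using i0 by (auto simp: eqA' ci I'_def)
      have "\<exists>k<d. c (Suc k) \<noteq> 0"
      proof (rule ccontr)
        assume "\<not> ?thesis"
        hence z: "\<forall>k<d. c (Suc k) = 0" by auto
        hence "A i0 0 * c 0 = 0" using ci[OF i0(1)] by simp
        hence "c 0 = 0" using i0 by simp
        with z c(1) show False by (metis less_Suc_eq_0_disj)
      qed
      with sol have "nts UNIV d I' (\<lambda>i k. A' i k)"
        unfolding nts_def by (intro exI[of _ "\<lambda>k. c (Suc k)"]) auto
      thus ?thesis by simp
    next
      case False
      with Suc.prems(2) have "finite I" "card I < Suc d" by auto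
      moreover have "card I > 0" using i0 \<open>finite I\<close> by (auto simp: card_gt_0_iff)
      ultimately show ?thesis using i0 unfolding I'_def by auto
    qed
    from Suc.IH[OF A'F this] obtain c' where c': "\<forall>k<d. c' k \<in> F" "\<exists>k<d. c' k \<noteq> 0"
        "\<forall>i\<in>I'. (\<Sum>k<d. A' i k * c' k) = 0"
      by (auto simp: nts_def)
    define c0 where "c0 = - (\<Sum>k<d. A i0 (Suc k) * c' k) / A i0 0"
    define c where "c k = (if k = 0 then c0 else c' (k - 1))" for k
    have c0F: "c0 \<in> F" unfolding c0_def using assms(1) Suc.prems(1) i0 c'(1)
      by (intro sf_divide sf_uminus sf_sum sf_mult) auto
    have "(\<Sum>k<Suc d. A i k * c k) = 0" if "i \<in> I" for i
    proof -
      have e: "(\<Sum>k<Suc d. A i k * c k) = A i 0 * c0 + (\<Sum>k<d. A i (Suc k) * c' k)"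
        unfolding sum.lessThan_Suc_shift by (simp add: c_def)
      show ?thesis
      proof (cases "i = i0")
        case True
        then show ?thesis unfolding e using i0 by (simp add: c0_def)
      next
        case False
        hence "i \<in> I'" using that by (simp add: I'_def)
        hence "(\<Sum>k<d. A i (Suc k) * c' k) - A i 0 / A i0 0 * (\<Sum>k<d. A i0 (Suc k) * c' k) = 0"
          using c'(3) eqA' by metis
        then show ?thesis unfolding e using i0 by (simp add: c0_def field_simps)
      qed
    qed
    moreover have "\<forall>k<Suc d. c k \<in> F"
      using c'(1) c0F by (auto simp: c_def)
    moreover have "\<exists>k<Suc d. c k \<noteq> 0"
    proof -
      from c'(2) obtain k where "k < d" "c' k \<noteq> 0" by blast
      thus ?thesis by (intro exI[of _ "Suc k"]) (simp add: c_def)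
    qed
    ultimately show ?thesis unfolding nts_def by blast
  qed
qed

lemma unique_descent:
  fixes R :: "((nat \<Rightarrow> 'a::field) \<times> 'a) set"
  assumes F: "is_subfield F"
    and RF: "\<forall>(r,b)\<in>R. (\<forall>k<d. r k \<in> F) \<and> b \<in> F"
    and sol: "\<forall>(r,b)\<in>R. (\<Sum>k<d. r k * x k) = b"
    and uniq: "\<And>y. \<forall>(r,b)\<in>R. (\<Sum>k<d. r k * y k) = 0 \<Longrightarrow> \<forall>k<d. y k = 0"
  shows "\<forall>k<d. x k \<in> F"
proof -
  define A :: "(nat \<Rightarrow> 'a) \<times> 'a \<Rightarrow> nat \<Rightarrow> 'a" where "A rb k = (if k < d then fst rb k else - snd rb)" for rb k
  have S: "(\<Sum>k<Suc d. A rb k * c k) = (\<Sum>k<d. fst rb k * c k) - snd rb * c d" for rb c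
    by (simp add: A_def)
  have "nts UNIV (Suc d) R A"
    unfolding nts_def
  proof (rule exI[of _ "\<lambda>k. if k < d then x k else 1"], intro conjI ballI)
    fix rb assume "rb \<in> R"
    then show "(\<Sum>k<Suc d. A rb k * (if k < d then x k else 1)) = 0"
      unfolding S using sol by (cases rb) auto
  qed auto
  moreover have "\<forall>i\<in>R. \<forall>k<Suc d. A i k \<in> F"
    using RF F by (auto simp: A_def intro!: sf_uminus)
  ultimately have "nts F (Suc d) R A" using hom_descent[OF F] by blast
  then obtain c where c: "\<forall>k<Suc d. c k \<in> F" "\<exists>k<Suc d. c k \<noteq> 0"
     "\<forall>i\<in>R. (\<Sum>k<Suc d. A i k * c k) = 0"
    by (auto simp: nts_def)
  have c3: "\<forall>rb\<in>R. (\<Sum>k<d. fst rb k * c k) - snd rb * c d = 0"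
    using c(3) unfolding S .
  have cd: "c d \<noteq> 0"
  proof
    assume "c d = 0"
    hence "\<forall>(r,b)\<in>R. (\<Sum>k<d. r k * c k) = 0" using c3 by auto
    hence "\<forall>k<d. c k = 0" by (rule uniq)
    with c(2) \<open>c d = 0\<close> show False by (metis less_Suc_eq)
  qed
  define z where "z k = c k / c d" for k
  have zsol: "(\<Sum>k<d. r k * z k) = b" if "(r,b) \<in> R" for r b
  proof -
    have "(\<Sum>k<d. r k * c k) = b * c d" using c3 that by force
    hence "(\<Sum>k<d. r k * c k) / c d = b" using cd by simp
    thus ?thesis by (simp add: z_def sum_divide_distrib)
  qed
  have "\<forall>(r,b)\<in>R. (\<Sum>k<d. r k * (x k - z k)) = 0"
    using sol zsol by (auto simp: algebra_simps sum_subtractf)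
  hence "\<forall>k<d. x k - z k = 0" by (rule uniq)
  moreover have "\<forall>k<d. z k \<in> F" using c(1) F by (auto simp: z_def intro: sf_divide)
  ultimately show ?thesis by auto
qed




lemma card_roots_ge:
  fixes P :: "'a::alg_closed_field poly"
  assumes "P \<noteq> 0" "\<forall>x. poly P x = 0 \<longrightarrow> poly (pderiv P) x \<noteq> 0"
  shows "degree P \<le> card {x. poly P x = 0}"
  using assms
proof (induction "degree P" arbitrary: P rule: less_induct)
  case (less P)
  show ?case
  proof (cases "degree P = 0")
    case True then show ?thesis by simp
  next
    case False
    then obtain x where x: "poly P x = 0" using alg_closed_imp_poly_has_root by blast
    hence "[:-x, 1:] dvd P" using poly_eq_0_iff_dvd by blast
    then obtain Q where PQ: "P = [:-x, 1:] * Q" by (elim dvdE)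
    have Q0: "Q \<noteq> 0" using less.prems PQ by auto
    have degP: "degree P = Suc (degree Q)" unfolding PQ using Q0 by (subst degree_mult_eq) auto
    have dP: "pderiv P = Q + [:-x, 1:] * pderiv Q"
      by (simp only: PQ pderiv_mult) (simp add: pderiv_pCons algebra_simps)
    have "poly (pderiv P) x \<noteq> 0" using less.prems(2) x by blast
    hence Qx: "poly Q x \<noteq> 0" by (simp add: dP)
    have "\<forall>y. poly Q y = 0 \<longrightarrow> poly (pderiv Q) y \<noteq> 0"
    proof (intro allI impI)
      fix y assume y: "poly Q y = 0"
      hence "poly P y = 0" by (simp add: PQ)
      hence "poly (pderiv P) y \<noteq> 0" using less.prems(2) by blast
      thus "poly (pderiv Q) y \<noteq> 0" using y by (simp add: dP)
    qed
    from less.hyps[of Q] this Q0 degP have IH: "degree Q \<le> card {x. poly Q x = 0}" by simp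
    have "{x. poly P x = 0} = insert x {x. poly Q x = 0}" by (auto simp: PQ)
    moreover have "finite {x. poly Q x = 0}" using Q0 poly_roots_finite by blast
    ultimately have "card {x. poly P x = 0} = Suc (card {x. poly Q x = 0})"
      using Qx by simp
    thus ?thesis using IH degP by simp
  qed
qed

lemma few_roots_zero:
  fixes P :: "'a::field poly"
  assumes "\<forall>j>D. coeff P j = 0" "S \<subseteq> {x. poly P x = 0}" "card S > D" "finite S"
  shows "P = 0"
proof (rule ccontr)
  assume P: "P \<noteq> 0"
  have "degree P \<le> D" using assms(1) by (intro degree_le) auto
  moreover have "card S \<le> card {x. poly P x = 0}"
    using assms(2) P poly_roots_finite by (intro card_mono) auto
  moreover have "card {x. poly P x = 0} \<le> degree P" using card_poly_roots_bound P by blast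
  ultimately show False using assms(3) by linarith
qed

locale frob =
  fixes K :: "'a::alg_closed_field set" and p m q n :: nat and a :: "nat \<Rightarrow> 'a"
  assumes K: "is_subfield K" and p: "prime p" and char: "CHAR('a) = p" and m: "m \<ge> 1"
    and q: "q = p ^ m"
    and Fq: "{x. x ^ q = x} \<subseteq> K" and aK: "\<forall>i<n. a i \<in> K" and n: "n > 0" and a0: "a 0 \<noteq> 0"
begin

lemma q_ge2: "q \<ge> 2"
proof -
  have "p \<ge> 2" using p prime_ge_2_nat by blast
  hence "p ^ 1 \<le> p ^ m" using m by (intro power_increasing) auto
  thus ?thesis using \<open>p \<ge> 2\<close> q by simp
qed

lemma q_pos: "q > 0" using q_ge2 by simp

lemma pchar: "prime CHAR('a)" using p char by simp

lemma frob_add: "(x + y :: 'a) ^ q = x ^ q + y ^ q"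
  using freshmans_dream'[OF pchar, of q m] q char by simp

lemma frob_sum: "(sum (f :: 'b \<Rightarrow> 'a) A) ^ q = (\<Sum>i\<in>A. f i ^ q)"
  using freshmans_dream_sum'[OF pchar, of q m] q char by simp

lemma frob_minus: "(- x :: 'a) ^ q = - (x ^ q)"
proof -
  have "(x + - x) ^ q = x ^ q + (- x) ^ q" by (rule frob_add)
  moreover have "(0::'a) ^ q = 0" using q_pos by (simp add: zero_power)
  ultimately have "x ^ q + (- x) ^ q = 0" by simp
  thus ?thesis by (simp add: add_eq_0_iff)
qed

lemma frob_diff: "(x - y :: 'a) ^ q = x ^ q - y ^ q"
  using frob_add[of x "-y"] frob_minus[of y] by simp

lemma frob_inj: "(x :: 'a) ^ q = y ^ q \<Longrightarrow> x = y"
  using frob_diff[of x y] by simp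

lemma frob_root: "\<exists>e. e ^ q = (c :: 'a)"
  using nth_root_exists q_pos by blast

lemma frobk_sum: "(sum (f :: 'b \<Rightarrow> 'a) A) ^ (q ^ k) = (\<Sum>i\<in>A. f i ^ (q ^ k))"
proof (induction k)
  case (Suc k)
  have "(sum f A) ^ (q ^ Suc k) = ((sum f A) ^ (q ^ k)) ^ q"
    by (simp add: power_mult[symmetric] mult.commute)
  also have "\<dots> = (\<Sum>i\<in>A. (f i ^ (q ^ k)) ^ q)" by (simp add: Suc frob_sum)
  also have "\<dots> = (\<Sum>i\<in>A. f i ^ (q ^ Suc k))"
    by (simp add: power_mult[symmetric] mult.commute)
  finally show ?case .
qed simp

lemma ofnat_qpow: "k \<ge> 1 \<Longrightarrow> (of_nat (q ^ k) :: 'a) = 0"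
proof -
  assume "k \<ge> 1"
  have "p dvd q" using q m by (simp add: dvd_power[of m p])
  hence "p dvd q ^ k" using \<open>k \<ge> 1\<close> by (metis dvd_power dvd_trans le_numeral_extra(2) not_one_le_zero zero_less_iff_neq_zero)
  thus ?thesis using char of_nat_eq_0_iff_char_dvd by metis
qed

lemma qpow_inj: "q ^ i = q ^ j \<longleftrightarrow> i = j"
  using q_ge2 by (simp add: power_inject_exp)

lemma qpow_eq1: "q ^ i = 1 \<longleftrightarrow> i = 0"
  using q_ge2 by (metis power_0 qpow_inj)

lemma qpow_mono: "i \<le> j \<Longrightarrow> q ^ i \<le> q ^ j"
  using q_ge2 by (simp add: power_increasing)

lemma qpow_less: "i < j \<Longrightarrow> q ^ i < q ^ j"
  using q_ge2 by (simp add: power_strict_increasing)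

lemma pow_qpow_Suc: "(x :: 'a) ^ (q ^ Suc k) = (x ^ (q ^ k)) ^ q"
  by (simp add: power_mult[symmetric] mult.commute)

lemma Fq_K: "x ^ q = x \<Longrightarrow> x \<in> K" using Fq by blast

end




lemma pderiv_sum': "pderiv (sum f A) = (\<Sum>x\<in>A. pderiv (f x))"
  by (induction A rule: infinite_finite_induct) (auto simp: pderiv_add)

lemma sep_const_deriv:
  fixes P :: "'a::field poly"
  assumes "pderiv P = [:c:]" "c \<noteq> 0"
  shows "separable_poly P"
proof -
  have "is_unit [:c:]" using assms(2) by (simp add: is_unit_const_poly_iff dvd_field_iff)
  thus ?thesis unfolding separable_poly_def assms(1) by (rule is_unit_right_imp_coprime)
qed

context frob
begin

definition sol :: "(nat \<Rightarrow> 'a) \<Rightarrow> bool" where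
  "sol Y \<longleftrightarrow> (\<forall>i<n. Y i = (if i = 0 then 0 else Y (i - 1) ^ q) + a i * Y (n - 1) ^ q)"

lemma poly_f: "poly (add_poly q n a) v = v ^ (q ^ n) - (\<Sum>i<n. a i * v ^ (q ^ i))"
  by (simp add: add_poly_def poly_monom poly_sum)

lemma coeff_f: "coeff (add_poly q n a) j = (if q ^ n = j then 1 else 0) - (\<Sum>i<n. if q ^ i = j then a i else 0)"
  by (simp add: add_poly_def coeff_sum)

lemma pderiv_f: "pderiv (add_poly q n a) = [:- a 0:]"
proof -
  obtain n' where n': "n = Suc n'" using n by (cases n) auto
  have "pderiv (add_poly q n a) = monom (of_nat (q ^ n)) (q ^ n - 1) - (\<Sum>i<n. monom (of_nat (q ^ i) * a i) (q ^ i - 1))"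
    by (simp add: add_poly_def pderiv_diff pderiv_sum' pderiv_monom)
  also have "(\<Sum>i<n. monom (of_nat (q ^ i) * a i) (q ^ i - 1)) = monom (a 0) 0"
  proof -
    have oq: "(of_nat q :: 'a) = 0" using ofnat_qpow[of 1] by simp
    show ?thesis unfolding n' sum.lessThan_Suc_shift by (simp add: oq)
  qed
  also have "monom (of_nat (q ^ n) :: 'a) (q ^ n - 1) = 0" using ofnat_qpow[of n] n by simp
  finally show ?thesis by (simp add: monom_0)
qed

lemma coeff_f_qn: "coeff (add_poly q n a) (q ^ n) = 1"
proof -
  have "(\<Sum>i<n. if q ^ i = q ^ n then a i else 0) = 0"
    by (rule sum.neutral) (auto simp: qpow_inj)
  thus ?thesis by (simp add: coeff_f)
qed

lemma f_nz: "add_poly q n a \<noteq> 0" using coeff_f_qn by auto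

lemma card_roots_f: "q ^ n \<le> card {v. poly (add_poly q n a) v = 0}"
proof -
  have "q ^ n \<le> degree (add_poly q n a)" using coeff_f_qn by (intro le_degree) simp
  also have "\<dots> \<le> card {v. poly (add_poly q n a) v = 0}"
    using a0 by (intro card_roots_ge f_nz) (simp add: pderiv_f)
  finally show ?thesis .
qed

lemma roots_f_sep: "poly (add_poly q n a) v = 0 \<Longrightarrow> v \<in> sep_closure K"
  unfolding sep_closure_def
proof (intro CollectI exI conjI allI)
  fix i
  show "coeff (add_poly q n a) i \<in> K" unfolding coeff_f using K aK
    by (intro sf_diff sf_sum) (auto simp: sf_0 sf_1)
  show "separable_poly (add_poly q n a)" using a0 by (intro sep_const_deriv[OF pderiv_f]) simp
qed (use f_nz in auto)

lemma pairing:
  assumes "poly (add_poly q n a) v = 0" "sol Y"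
  shows "(\<Sum>i<n. v ^ (q ^ i) * Y i) ^ q = (\<Sum>i<n. v ^ (q ^ i) * Y i)"
proof -
  obtain n' where n': "n = Suc n'" using n by (cases n) auto
  have vn: "(\<Sum>i<n. a i * v ^ (q ^ i)) = v ^ (q ^ n)" using assms(1) by (simp add: poly_f)
  have Yi: "Y i = (if i = 0 then 0 else Y (i - 1) ^ q) + a i * Y n' ^ q" if "i < n" for i
  proof -
    have "Y i = (if i = 0 then 0 else Y (i - 1) ^ q) + a i * Y (n - 1) ^ q"
      using assms(2) that unfolding sol_def by blast
    thus ?thesis using n' by simp
  qed
  have "(\<Sum>i<n. v ^ (q ^ i) * Y i) = (\<Sum>i<n. v ^ (q ^ i) * ((if i = 0 then 0 else Y (i - 1) ^ q) + a i * Y n' ^ q))"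
  proof (rule sum.cong[OF refl])
    fix i assume "i \<in> {..<n}"
    hence "Y i = (if i = 0 then 0 else Y (i - 1) ^ q) + a i * Y n' ^ q" by (intro Yi) simp
    thus "v ^ (q ^ i) * Y i = v ^ (q ^ i) * ((if i = 0 then 0 else Y (i - 1) ^ q) + a i * Y n' ^ q)"
      by (rule arg_cong[where f="\<lambda>t. v ^ (q ^ i) * t"])
  qed
  also have "\<dots> = (\<Sum>i<n. v ^ (q ^ i) * (if i = 0 then 0 else Y (i - 1) ^ q) + (a i * v ^ (q ^ i)) * Y n' ^ q)"
    by (simp add: algebra_simps)
  also have "\<dots> = (\<Sum>i<n. v ^ (q ^ i) * (if i = 0 then 0 else Y (i - 1) ^ q)) + (\<Sum>i<n. a i * v ^ (q ^ i)) * Y n' ^ q"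
    by (simp add: sum.distrib sum_distrib_right)
  also have "(\<Sum>i<n. v ^ (q ^ i) * (if i = 0 then 0 else Y (i - 1) ^ q)) = (\<Sum>i<n'. v ^ (q ^ Suc i) * Y i ^ q)"
    unfolding n' sum.lessThan_Suc_shift by simp
  finally have R: "(\<Sum>i<n. v ^ (q ^ i) * Y i) = (\<Sum>i<n'. v ^ (q ^ Suc i) * Y i ^ q) + v ^ (q ^ n) * Y n' ^ q"
    using vn by simp
  have "(\<Sum>i<n. v ^ (q ^ i) * Y i) ^ q = (\<Sum>i<n. v ^ (q ^ Suc i) * Y i ^ q)"
    by (simp add: frob_sum power_mult_distrib mult.commute flip: power_mult)
  also have "\<dots> = (\<Sum>i<n'. v ^ (q ^ Suc i) * Y i ^ q) + v ^ (q ^ n) * Y n' ^ q"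
    unfolding n' by simp
  finally show ?thesis using R by simp
qed

lemma S1:
  assumes "\<forall>v. poly (add_poly q n a) v = 0 \<longrightarrow> (\<Sum>i<n. y i * v ^ (q ^ i)) = 0"
  shows "\<forall>i<n. y i = 0"
proof -
  define P where "P = (\<Sum>i<n. monom (y i) (q ^ i))"
  have cP: "coeff P j = (\<Sum>i<n. if q ^ i = j then y i else 0)" for j
    by (simp add: P_def coeff_sum)
  have "P = 0"
  proof (rule few_roots_zero)
    show "\<forall>j>q ^ (n - 1). coeff P j = 0"
    proof (intro allI impI)
      fix j assume j: "j > q ^ (n - 1)"
      have "q ^ i \<noteq> j" if "i < n" for i
      proof -
        have "q ^ i \<le> q ^ (n - 1)" using that by (intro qpow_mono) simp
        thus ?thesis using j by simp
      qed
      thus "coeff P j = 0" unfolding cP by (intro sum.neutral) auto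
    qed
    show "{v. poly (add_poly q n a) v = 0} \<subseteq> {x. poly P x = 0}"
      using assms by (auto simp: P_def poly_sum poly_monom)
    show "q ^ (n - 1) < card {v. poly (add_poly q n a) v = 0}"
      using card_roots_f qpow_less[of "n - 1" n] n by linarith
    show "finite {v. poly (add_poly q n a) v = 0}" using f_nz poly_roots_finite by blast
  qed
  show ?thesis
  proof (intro allI impI)
    fix i assume i: "i < n"
    have "coeff P (q ^ i) = (\<Sum>k<n. if k = i then y i else 0)"
      unfolding cP by (intro sum.cong) (auto simp: qpow_inj)
    also have "\<dots> = y i" using i by simp
    finally show "y i = 0" using \<open>P = 0\<close> by simp
  qed
qed

end




context frob
begin

definition stp :: "(nat \<Rightarrow> 'a) \<Rightarrow> nat \<Rightarrow> 'a" where
  "stp \<rho> i = (if i = 0 then (\<rho> (n - 1) ^ q - (\<Sum>j<n - 1. \<rho> j ^ q * a (Suc j))) / a 0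
              else if i < n then \<rho> (i - 1) ^ q else 0)"

lemma sum_n_first: "(\<Sum>j<n. g j) = g 0 + (\<Sum>j<n - 1. g (Suc j))"
proof -
  obtain n' where n': "n = Suc n'" using n by (cases n) auto
  show ?thesis unfolding n' sum.lessThan_Suc_shift by simp
qed

lemma sum_n_last: "(\<Sum>j<n. g j) = (\<Sum>j<n - 1. g j) + g (n - 1)"
proof -
  obtain n' where n': "n = Suc n'" using n by (cases n) auto
  show ?thesis unfolding n' by simp
qed

lemma stp_0: "stp \<rho> 0 = (\<rho> (n - 1) ^ q - (\<Sum>j<n - 1. \<rho> j ^ q * a (Suc j))) / a 0"
  by (simp add: stp_def)

lemma stp_Suc: "Suc j < n \<Longrightarrow> stp \<rho> (Suc j) = \<rho> j ^ q"
  by (simp add: stp_def)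

lemma sol_eqs:
  assumes "sol Y" "n = Suc n'"
  shows "Y n' ^ q = Y 0 / a 0" "\<And>j. j < n' \<Longrightarrow> Y j ^ q = Y (Suc j) - a (Suc j) * Y 0 / a 0"
proof -
  have "Y 0 = (if (0::nat) = 0 then 0 else Y (0 - 1) ^ q) + a 0 * Y (n - 1) ^ q"
    using assms(1) n unfolding sol_def by blast
  hence "Y 0 = a 0 * Y (n - 1) ^ q" by simp
  thus "Y n' ^ q = Y 0 / a 0" using a0 assms(2) by (simp add: field_simps)
  fix j assume "j < n'"
  hence "Suc j < n" using assms(2) by simp
  hence "Y (Suc j) = (if Suc j = 0 then 0 else Y (Suc j - 1) ^ q) + a (Suc j) * Y (n - 1) ^ q"
    using assms(1) unfolding sol_def by blast
  hence "Y (Suc j) = Y j ^ q + a (Suc j) * Y n' ^ q" using assms(2) by simp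
  thus "Y j ^ q = Y (Suc j) - a (Suc j) * Y 0 / a 0"
    using \<open>Y n' ^ q = Y 0 / a 0\<close> by simp
qed

lemma stp_eval:
  assumes "sol Y"
  shows "(\<Sum>j<n. \<rho> j * Y j) ^ q = (\<Sum>j<n. stp \<rho> j * Y j)"
proof -
  define n' where "n' = n - 1"
  have n': "n = Suc n'" using n by (simp add: n'_def)
  note E = sol_eqs[OF assms n']
  have "(\<Sum>j<n. \<rho> j * Y j) ^ q = (\<Sum>j<n. \<rho> j ^ q * Y j ^ q)"
    by (simp add: frob_sum power_mult_distrib)
  also have "\<dots> = (\<Sum>j<n'. \<rho> j ^ q * Y j ^ q) + \<rho> n' ^ q * Y n' ^ q"
    unfolding n'_def by (rule sum_n_last)
  also have "(\<Sum>j<n'. \<rho> j ^ q * Y j ^ q) = (\<Sum>j<n'. \<rho> j ^ q * (Y (Suc j) - a (Suc j) * Y 0 / a 0))"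
    using E(2) by (intro sum.cong) auto
  also have "\<dots> = (\<Sum>j<n'. \<rho> j ^ q * Y (Suc j)) - (\<Sum>j<n'. \<rho> j ^ q * a (Suc j)) * Y 0 / a 0"
    by (simp add: algebra_simps sum_subtractf sum_distrib_right sum_distrib_left sum_divide_distrib)
  finally have L: "(\<Sum>j<n. \<rho> j * Y j) ^ q = (\<Sum>j<n'. \<rho> j ^ q * Y (Suc j)) - (\<Sum>j<n'. \<rho> j ^ q * a (Suc j)) * Y 0 / a 0 + \<rho> n' ^ q * (Y 0 / a 0)"
    using E(1) by simp
  have "(\<Sum>j<n. stp \<rho> j * Y j) = stp \<rho> 0 * Y 0 + (\<Sum>j<n'. stp \<rho> (Suc j) * Y (Suc j))"
    unfolding n'_def by (rule sum_n_first)
  also have "(\<Sum>j<n'. stp \<rho> (Suc j) * Y (Suc j)) = (\<Sum>j<n'. \<rho> j ^ q * Y (Suc j))"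
    by (intro sum.cong refl, subst stp_Suc) (auto simp: n'_def)
  also have "stp \<rho> 0 = (\<rho> n' ^ q - (\<Sum>j<n'. \<rho> j ^ q * a (Suc j))) / a 0"
    by (simp add: stp_0 n'_def)
  finally have R: "(\<Sum>j<n. stp \<rho> j * Y j) = (\<rho> n' ^ q - (\<Sum>j<n'. \<rho> j ^ q * a (Suc j))) / a 0 * Y 0 + (\<Sum>j<n'. \<rho> j ^ q * Y (Suc j))" .
  have "(\<Sum>j<n'. \<rho> j ^ q * Y (Suc j)) - (\<Sum>j<n'. \<rho> j ^ q * a (Suc j)) * Y 0 / a 0 + \<rho> n' ^ q * (Y 0 / a 0)
     = (\<rho> n' ^ q - (\<Sum>j<n'. \<rho> j ^ q * a (Suc j))) / a 0 * Y 0 + (\<Sum>j<n'. \<rho> j ^ q * Y (Suc j))"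
    using a0 by (simp add: field_simps)
  thus ?thesis by (simp only: L R)
qed

lemma stp_inv:
  assumes "\<forall>j<n. (\<Sum>k\<in>S. c k * stp (\<sigma> k) j) = 0"
  shows "\<forall>j<n. (\<Sum>k\<in>S. c k * \<sigma> k j ^ q) = 0"
proof -
  define n' where "n' = n - 1"
  have n': "n = Suc n'" using n by (simp add: n'_def)
  have low: "(\<Sum>k\<in>S. c k * \<sigma> k j ^ q) = 0" if "j < n'" for j
  proof -
    have "(\<Sum>k\<in>S. c k * stp (\<sigma> k) (Suc j)) = 0" using assms that n' by auto
    moreover have "Suc j < n" using that n' by simp
    hence "stp (\<sigma> k) (Suc j) = \<sigma> k j ^ q" for k by (rule stp_Suc)
    ultimately show ?thesis by simp
  qed
  have "(\<Sum>k\<in>S. c k * stp (\<sigma> k) 0) = 0" using assms n by auto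
  hence "(\<Sum>k\<in>S. c k * (\<sigma> k n' ^ q - (\<Sum>j<n'. \<sigma> k j ^ q * a (Suc j)))) / a 0 = 0"
    by (simp add: stp_0 n'_def sum_divide_distrib)
  hence "(\<Sum>k\<in>S. c k * (\<sigma> k n' ^ q - (\<Sum>j<n'. \<sigma> k j ^ q * a (Suc j)))) = 0" using a0 by simp
  hence "(\<Sum>k\<in>S. c k * \<sigma> k n' ^ q) - (\<Sum>k\<in>S. \<Sum>j<n'. c k * \<sigma> k j ^ q * a (Suc j)) = 0"
    by (simp add: algebra_simps sum_subtractf sum_distrib_left)
  moreover have "(\<Sum>k\<in>S. \<Sum>j<n'. c k * \<sigma> k j ^ q * a (Suc j)) = (\<Sum>j<n'. (\<Sum>k\<in>S. c k * \<sigma> k j ^ q) * a (Suc j))"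
    by (subst sum.swap) (simp add: sum_distrib_right)
  moreover have "\<dots> = 0" using low by simp
  ultimately have "(\<Sum>k\<in>S. c k * \<sigma> k n' ^ q) = 0" by simp
  thus ?thesis using low n' by (metis less_Suc_eq)
qed

definition rho :: "(nat \<Rightarrow> 'a) \<Rightarrow> nat \<Rightarrow> nat \<Rightarrow> 'a" where
  "rho r k = (stp ^^ k) r"

lemma rho_Suc: "rho r (Suc k) = stp (rho r k)"
  by (simp add: rho_def)

lemma rho_eval:
  assumes "sol Y"
  shows "(\<Sum>j<n. r j * Y j) ^ (q ^ k) = (\<Sum>j<n. rho r k j * Y j)"
proof (induction k)
  case 0 then show ?case by (simp add: rho_def)
next
  case (Suc k)
  have "(\<Sum>j<n. r j * Y j) ^ (q ^ Suc k) = ((\<Sum>j<n. r j * Y j) ^ (q ^ k)) ^ q"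
    by (rule pow_qpow_Suc)
  also have "\<dots> = (\<Sum>j<n. stp (rho r k) j * Y j)" unfolding Suc by (rule stp_eval[OF assms])
  finally show ?case by (simp add: rho_Suc)
qed

lemma stp_K: "\<forall>j<n. \<rho> j \<in> K \<Longrightarrow> \<forall>j<n. stp \<rho> j \<in> K"
  unfolding stp_def using K aK n
  by (auto intro!: sf_divide sf_diff sf_power sf_sum sf_mult sf_0)

lemma rho_K: "\<forall>j<n. r j \<in> K \<Longrightarrow> \<forall>j<n. rho r k j \<in> K"
  by (induction k) (auto simp: rho_def dest: stp_K)

lemma sep_lin:
  assumes rK: "\<forall>j<n. r j \<in> K"
  shows "\<exists>P. P \<noteq> 0 \<and> (\<forall>i. coeff P i \<in> K) \<and> separable_poly P \<and>
             (\<forall>Y. sol Y \<longrightarrow> poly P (\<Sum>j<n. r j * Y j) = 0)"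
proof -
  define SS where "SS M \<longleftrightarrow> nts K (Suc M) {..<n} (\<lambda>j k. rho r k j)" for M
  have ent: "\<forall>j\<in>{..<n}. \<forall>k<d. rho r k j \<in> K" for d using rho_K[OF rK] by auto
  have "SS n" unfolding SS_def by (rule hom_descent[OF K ent]) simp
  define M0 where "M0 = (LEAST M. SS M)"
  have SM0: "SS M0" unfolding M0_def by (rule LeastI[of SS n]) fact
  then obtain c where c: "\<forall>k<Suc M0. c k \<in> K" "\<exists>k<Suc M0. c k \<noteq> 0"
      "\<forall>j<n. (\<Sum>k<Suc M0. rho r k j * c k) = 0"
    unfolding SS_def nts_def by auto
  have c0: "c 0 \<noteq> 0"
  proof
    assume c00: "c 0 = 0"
    then obtain M' where M': "M0 = Suc M'" using c(2) by (cases M0) auto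
    have eq1: "\<forall>j<n. (\<Sum>k<Suc M'. c (Suc k) * stp (rho r k) j) = 0"
    proof (intro allI impI)
      fix j assume "j < n"
      hence "(\<Sum>k<Suc (Suc M'). rho r k j * c k) = 0" using c(3) M' by auto
      hence "(\<Sum>k<Suc M'. rho r (Suc k) j * c (Suc k)) = 0"
        unfolding sum.lessThan_Suc_shift[of _ "Suc M'"] using c00 by simp
      thus "(\<Sum>k<Suc M'. c (Suc k) * stp (rho r k) j) = 0" by (simp add: rho_Suc mult.commute)
    qed
    have eq2: "\<forall>j<n. (\<Sum>k<Suc M'. c (Suc k) * rho r k j ^ q) = 0"
      by (rule stp_inv[OF eq1])
    define e where "e k = (SOME e. e ^ q = c (Suc k))" for k
    have e: "e k ^ q = c (Suc k)" for k unfolding e_def using frob_root by (rule someI_ex)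
    have "\<forall>j<n. (\<Sum>k<Suc M'. rho r k j * e k) = 0"
    proof (intro allI impI)
      fix j assume "j < n"
      have "(\<Sum>k<Suc M'. rho r k j * e k) ^ q = (\<Sum>k<Suc M'. rho r k j ^ q * e k ^ q)"
        by (simp only: frob_sum power_mult_distrib)
      also have "\<dots> = (\<Sum>k<Suc M'. c (Suc k) * rho r k j ^ q)"
        by (simp only: e mult.commute)
      also have "\<dots> = 0" using eq2 \<open>j < n\<close> by auto
      finally show "(\<Sum>k<Suc M'. rho r k j * e k) = 0" using q_pos by simp
    qed
    moreover have "\<exists>k<Suc M'. e k \<noteq> 0"
    proof -
      from c(2) obtain k where k: "k < Suc M0" "c k \<noteq> 0" by auto
      with c00 obtain k' where "k = Suc k'" by (cases k) auto
      with k M' e[of k'] q_pos show ?thesis by (intro exI[of _ k']) (auto simp: zero_power)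
    qed
    ultimately have "nts UNIV (Suc M') {..<n} (\<lambda>j k. rho r k j)"
      unfolding nts_def by (intro exI[of _ e]) auto
    hence "SS M'" unfolding SS_def by (intro hom_descent[OF K ent]) simp
    hence "M0 \<le> M'" unfolding M0_def by (rule Least_le)
    with M' show False by simp
  qed
  define P where "P = (\<Sum>k<Suc M0. monom (c k) (q ^ k))"
  have cP: "coeff P i = (\<Sum>k<Suc M0. if q ^ k = i then c k else 0)" for i
    by (simp add: P_def coeff_sum)
  have "coeff P 1 = (\<Sum>k<Suc M0. if k = 0 then c 0 else 0)"
    unfolding cP using q_ge2 by (intro sum.cong) (auto simp: qpow_eq1)
  hence P1: "coeff P 1 = c 0" by simp
  have oq: "(of_nat q :: 'a) = 0" using ofnat_qpow[of 1] by simp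
  have "pderiv P = (\<Sum>k<Suc M0. monom (of_nat (q ^ k) * c k) (q ^ k - 1))"
    by (simp only: P_def pderiv_sum' pderiv_monom)
  also have "\<dots> = [:c 0:]" unfolding sum.lessThan_Suc_shift by (simp add: oq monom_0)
  finally have dP: "pderiv P = [:c 0:]" .
  show ?thesis
  proof (intro exI conjI allI impI)
    show "P \<noteq> 0" using P1 c0 by auto
    show "coeff P i \<in> K" for i unfolding cP using c(1) K by (intro sf_sum) (auto simp: sf_0)
    show "separable_poly P" by (rule sep_const_deriv[OF dP c0])
    fix Y assume Y: "sol Y"
    have "poly P (\<Sum>j<n. r j * Y j) = (\<Sum>k<Suc M0. c k * (\<Sum>j<n. r j * Y j) ^ (q ^ k))"
      by (simp add: P_def poly_sum poly_monom)
    also have "\<dots> = (\<Sum>k<Suc M0. c k * (\<Sum>j<n. rho r k j * Y j))"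
      by (simp add: rho_eval[OF Y])
    also have "\<dots> = (\<Sum>k<Suc M0. \<Sum>j<n. Y j * (rho r k j * c k))"
      by (simp only: sum_distrib_left mult_ac)
    also have "\<dots> = (\<Sum>j<n. \<Sum>k<Suc M0. Y j * (rho r k j * c k))" by (rule sum.swap)
    also have "\<dots> = (\<Sum>j<n. Y j * (\<Sum>k<Suc M0. rho r k j * c k))"
      by (simp only: sum_distrib_left)
    also have "\<dots> = 0" using c(3) by simp
    finally show "poly P (\<Sum>j<n. r j * Y j) = 0" .
  qed
qed

lemma sep_lin':
  "\<forall>j<n. r j \<in> K \<Longrightarrow> sol Y \<Longrightarrow> (\<Sum>j<n. r j * Y j) \<in> sep_closure K"
proof -
  assume rK: "\<forall>j<n. r j \<in> K" and Y: "sol Y"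
  obtain P where P: "P \<noteq> 0" "\<forall>i. coeff P i \<in> K" "separable_poly P"
    "\<forall>Y. sol Y \<longrightarrow> poly P (\<Sum>j<n. r j * Y j) = 0"
    using sep_lin[OF rK] by blast
  show ?thesis unfolding sep_closure_def
    by (intro CollectI exI[of _ P] conjI) (use P Y in auto)
qed

end




context frob
begin

definition Hp :: "nat \<Rightarrow> 'a poly" where
  "Hp i = (\<Sum>k<Suc i. monom (a k ^ (q ^ (i - k))) (q ^ (i - k)))"

lemma poly_Hp: "poly (Hp i) u = (\<Sum>k<Suc i. a k ^ (q ^ (i - k)) * u ^ (q ^ (i - k)))"
  by (simp only: Hp_def poly_sum poly_monom)

lemma coeff_Hp: "coeff (Hp i) j = (\<Sum>k<Suc i. if q ^ (i - k) = j then a k ^ (q ^ (i - k)) else 0)"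
  by (simp only: Hp_def coeff_sum coeff_monom)

lemma Hp_rec: "poly (Hp (Suc i)) u = (poly (Hp i) u) ^ q + a (Suc i) * u"
proof -
  have "poly (Hp (Suc i)) u = (\<Sum>k<Suc i. a k ^ (q ^ (Suc i - k)) * u ^ (q ^ (Suc i - k))) + a (Suc i) * u"
    unfolding poly_Hp by (simp only: sum.lessThan_Suc) simp
  moreover have "(poly (Hp i) u) ^ q = (\<Sum>k<Suc i. a k ^ (q ^ (Suc i - k)) * u ^ (q ^ (Suc i - k)))"
    unfolding poly_Hp frob_sum power_mult_distrib
    by (intro sum.cong refl) (simp add: Suc_diff_le power_mult[symmetric] mult.commute)
  ultimately show ?thesis by simp
qed

definition Yr :: "'a \<Rightarrow> nat \<Rightarrow> 'a" where
  "Yr y i = poly (Hp i) (y ^ q)"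

definition G :: "'a poly" where
  "G = (\<Sum>k<n. monom (a k ^ (q ^ (n - 1 - k))) (q ^ (n - k))) - monom 1 1"

lemma poly_G: "poly G y = poly (Hp (n - 1)) (y ^ q) - y"
proof -
  have "poly (Hp (n - 1)) (y ^ q) = (\<Sum>k<n. a k ^ (q ^ (n - 1 - k)) * (y ^ q) ^ (q ^ (n - 1 - k)))"
    unfolding poly_Hp using n by simp
  also have "\<dots> = (\<Sum>k<n. a k ^ (q ^ (n - 1 - k)) * y ^ (q ^ (n - k)))"
  proof (intro sum.cong refl)
    fix k assume "k \<in> {..<n}"
    hence "n - k = Suc (n - 1 - k)" by auto
    hence "q ^ (n - k) = q * q ^ (n - 1 - k)" by simp
    thus "a k ^ (q ^ (n - 1 - k)) * (y ^ q) ^ (q ^ (n - 1 - k)) = a k ^ (q ^ (n - 1 - k)) * y ^ (q ^ (n - k))"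
      by (simp add: power_mult)
  qed
  finally show ?thesis by (simp add: G_def poly_sum poly_monom)
qed

lemma sol_Yr:
  assumes "poly G y = 0"
  shows "sol (Yr y)"
  unfolding sol_def
proof (intro allI impI)
  fix i assume i: "i < n"
  have last: "Yr y (n - 1) = y" using assms by (simp add: poly_G Yr_def)
  show "Yr y i = (if i = 0 then 0 else Yr y (i - 1) ^ q) + a i * Yr y (n - 1) ^ q"
  proof (cases i)
    case 0
    then show ?thesis by (simp only: last) (simp add: Yr_def poly_Hp)
  next
    case (Suc i')
    then show ?thesis by (simp only: last) (simp add: Yr_def Hp_rec)
  qed
qed

lemma coeff_G_qn: "coeff G (q ^ n) = a 0 ^ (q ^ (n - 1))"
proof -
  have "coeff G (q ^ n) = (\<Sum>k<n. if q ^ (n - k) = q ^ n then a k ^ (q ^ (n - 1 - k)) else 0) - (if 1 = q ^ n then 1 else 0)"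
    by (simp only: G_def coeff_diff coeff_sum coeff_monom)
  also have "(\<Sum>k<n. if q ^ (n - k) = q ^ n then a k ^ (q ^ (n - 1 - k)) else 0) = (\<Sum>k<n. if k = 0 then a 0 ^ (q ^ (n - 1)) else 0)"
    by (intro sum.cong refl) (auto simp: qpow_inj)
  also have "\<dots> = a 0 ^ (q ^ (n - 1))" using n by simp
  also have "q ^ 1 \<le> q ^ n" using n by (intro qpow_mono) simp
  hence "q ^ n \<noteq> 1" using q_ge2 n by simp
  hence "(1 = q ^ n) = False" by metis
  finally show ?thesis by simp
qed

lemma G_nz: "G \<noteq> 0"
  using coeff_G_qn a0 by (metis coeff_0 power_not_zero)

lemma pderiv_G: "pderiv G = [:-1:]"
proof -
  have "pderiv G = (\<Sum>k<n. monom (of_nat (q ^ (n - k)) * a k ^ (q ^ (n - 1 - k))) (q ^ (n - k) - 1)) - monom 1 0"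
    by (simp only: G_def pderiv_diff pderiv_sum' pderiv_monom) simp
  also have "(\<Sum>k<n. monom (of_nat (q ^ (n - k)) * a k ^ (q ^ (n - 1 - k))) (q ^ (n - k) - 1)) = 0"
  proof (intro sum.neutral ballI)
    fix k assume "k \<in> {..<n}"
    hence "n - k \<ge> 1" by auto
    hence "(of_nat (q ^ (n - k)) :: 'a) = 0" by (rule ofnat_qpow)
    thus "monom (of_nat (q ^ (n - k)) * a k ^ (q ^ (n - 1 - k))) (q ^ (n - k) - 1) = 0" by simp
  qed
  finally show ?thesis by (simp add: monom_0)
qed

lemma card_roots_G: "q ^ n \<le> card {y. poly G y = 0}"
proof -
  have "q ^ n \<le> degree G" using coeff_G_qn a0 by (intro le_degree) simp
  also have "\<dots> \<le> card {y. poly G y = 0}"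
    by (intro card_roots_ge G_nz) (simp add: pderiv_G)
  finally show ?thesis .
qed

lemma S2:
  assumes "\<forall>y. poly G y = 0 \<longrightarrow> (\<Sum>i<n. z i * Yr y i) = 0"
  shows "\<forall>i<n. z i = 0"
proof -
  define P where "P = (\<Sum>i<n. Polynomial.smult (z i) (Hp i))"
  have cP: "coeff P j = (\<Sum>i<n. z i * coeff (Hp i) j)" for j
    by (simp add: P_def coeff_sum)
  have hi: "coeff (Hp i) j = 0" if "i < n" "j > q ^ (n - 1)" for i j
    unfolding coeff_Hp
  proof (intro sum.neutral ballI)
    fix k assume "k \<in> {..<Suc i}"
    have "q ^ (i - k) \<le> q ^ (n - 1)" using that by (intro qpow_mono) auto
    thus "(if q ^ (i - k) = j then a k ^ q ^ (i - k) else 0) = 0" using that by auto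
  qed
  have "P = 0"
  proof (rule few_roots_zero[where S = "(\<lambda>y. y ^ q) ` {y. poly G y = 0}"])
    show "\<forall>j>q ^ (n - 1). coeff P j = 0" unfolding cP using hi by simp
    show "(\<lambda>y. y ^ q) ` {y. poly G y = 0} \<subseteq> {x. poly P x = 0}"
      using assms by (auto simp: P_def poly_sum Yr_def)
    have fin: "finite {y. poly G y = 0}" using G_nz poly_roots_finite by blast
    thus "finite ((\<lambda>y. y ^ q) ` {y. poly G y = 0})" by simp
    have "inj_on (\<lambda>y. y ^ q) {y. poly G y = 0}" by (auto intro!: inj_onI frob_inj)
    hence "card ((\<lambda>y. y ^ q) ` {y. poly G y = 0}) = card {y. poly G y = 0}" by (rule card_image)
    thus "q ^ (n - 1) < card ((\<lambda>y. y ^ q) ` {y. poly G y = 0})"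
      using card_roots_G qpow_less[of "n - 1" n] n by linarith
  qed
  show ?thesis
  proof (rule ccontr)
    assume nz: "\<not> (\<forall>i<n. z i = 0)"
    define Z where "Z = {i. i < n \<and> z i \<noteq> 0}"
    have Zne: "Z \<noteq> {}" and Zfin: "finite Z" using nz by (auto simp: Z_def)
    define J where "J = Max Z"
    have J: "J \<in> Z" using Zne Zfin by (simp add: J_def)
    have Jmax: "z i = 0" if "i < n" "i > J" for i
    proof (rule ccontr)
      assume "z i \<noteq> 0"
      hence "i \<in> Z" using that by (simp add: Z_def)
      hence "i \<le> J" unfolding J_def using Zfin by simp
      thus False using that by simp
    qed
    have cHJ: "coeff (Hp J) (q ^ J) = a 0 ^ (q ^ J)"
    proof -
      have "coeff (Hp J) (q ^ J) = (\<Sum>k<Suc J. if k = 0 then a 0 ^ (q ^ J) else 0)"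
        unfolding coeff_Hp by (intro sum.cong refl) (auto simp: qpow_inj)
      thus ?thesis by simp
    qed
    have "coeff P (q ^ J) = (\<Sum>i<n. if i = J then z J * a 0 ^ (q ^ J) else 0)"
      unfolding cP
    proof (intro sum.cong refl)
      fix i assume i: "i \<in> {..<n}"
      show "z i * coeff (Hp i) (q ^ J) = (if i = J then z J * a 0 ^ (q ^ J) else 0)"
      proof (cases "i < J")
        case True
        have "coeff (Hp i) (q ^ J) = 0" unfolding coeff_Hp
          using True by (intro sum.neutral ballI) (auto simp: qpow_inj)
        thus ?thesis using True by simp
      next
        case False
        thus ?thesis using Jmax[of i] i cHJ by (cases "i = J") auto
      qed
    qed
    also have "\<dots> = z J * a 0 ^ (q ^ J)" using J by (simp add: Z_def)
    finally show False using \<open>P = 0\<close> J a0 by (simp add: Z_def)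
  qed
qed

end




lemma mv_sum: "A \<in> carrier_mat n k \<Longrightarrow> v \<in> carrier_vec k \<Longrightarrow> i < n \<Longrightarrow> (A *\<^sub>v v) $ i = (\<Sum>j<k. A $$ (i, j) * v $ j)"
  by (simp add: scalar_prod_def atLeast0LessThan)

lemma mm_sum: "A \<in> carrier_mat n k \<Longrightarrow> B \<in> carrier_mat k l \<Longrightarrow> i < n \<Longrightarrow> j < l \<Longrightarrow> (A * B) $$ (i, j) = (\<Sum>t<k. A $$ (i, t) * B $$ (t, j))"
  by (simp add: scalar_prod_def atLeast0LessThan)

lemma mat_qpow_carrier[simp]: "A \<in> carrier_mat r c \<Longrightarrow> mat_qpow q A \<in> carrier_mat r c"
  unfolding mat_qpow_def by simp

lemma vec_qpow_carrier[simp]: "v \<in> carrier_vec r \<Longrightarrow> vec_qpow q v \<in> carrier_vec r"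
  unfolding vec_qpow_def by simp

lemma mat_qpow_mult:
  fixes A B :: "'a::field mat"
  assumes pc: "prime CHAR('a)" and q: "q = CHAR('a) ^ m"
    and A: "A \<in> carrier_mat n k" and B: "B \<in> carrier_mat k l"
  shows "mat_qpow q (A * B) = mat_qpow q A * mat_qpow q B"
proof (rule eq_matI)
  fix i j assume "i < dim_row (mat_qpow q A * mat_qpow q B)" "j < dim_col (mat_qpow q A * mat_qpow q B)"
  hence ij: "i < n" "j < l" using A B by (auto simp: mat_qpow_def)
  have "mat_qpow q (A * B) $$ (i, j) = ((A * B) $$ (i, j)) ^ q"
    using A B ij by (simp add: mat_qpow_def)
  also have "\<dots> = (\<Sum>t<k. (A $$ (i, t)) ^ q * (B $$ (t, j)) ^ q)"
    by (simp only: mm_sum[OF A B ij(1) ij(2)] freshmans_dream_sum'[OF pc q] power_mult_distrib)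
  also have "\<dots> = (mat_qpow q A * mat_qpow q B) $$ (i, j)"
    using A B ij by (subst mm_sum[of _ n k _ l]) (auto simp: mat_qpow_def)
  finally show "mat_qpow q (A * B) $$ (i, j) = (mat_qpow q A * mat_qpow q B) $$ (i, j)" .
qed (use A B in \<open>auto simp: mat_qpow_def\<close>)

lemma vec_qpow_mult:
  fixes A :: "'a::field mat"
  assumes pc: "prime CHAR('a)" and q: "q = CHAR('a) ^ m"
    and A: "A \<in> carrier_mat n k" and v: "v \<in> carrier_vec k"
  shows "vec_qpow q (A *\<^sub>v v) = mat_qpow q A *\<^sub>v vec_qpow q v"
proof (rule eq_vecI)
  fix i assume "i < dim_vec (mat_qpow q A *\<^sub>v vec_qpow q v)"
  hence i: "i < n" using A by (simp add: mat_qpow_def)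
  have "vec_qpow q (A *\<^sub>v v) $ i = ((A *\<^sub>v v) $ i) ^ q"
    using A i by (simp add: vec_qpow_def)
  also have "\<dots> = (\<Sum>j<k. (A $$ (i, j)) ^ q * (v $ j) ^ q)"
    by (simp only: mv_sum[OF A v i] freshmans_dream_sum'[OF pc q] power_mult_distrib)
  also have "\<dots> = (mat_qpow q A *\<^sub>v vec_qpow q v) $ i"
    using A v i by (subst mv_sum[of _ n k]) (auto simp: mat_qpow_def vec_qpow_def)
  finally show "vec_qpow q (A *\<^sub>v v) $ i = (mat_qpow q A *\<^sub>v vec_qpow q v) $ i" .
qed (use A in \<open>auto simp: vec_qpow_def mat_qpow_def\<close>)

lemma mat_qpow_one: "q > 0 \<Longrightarrow> mat_qpow q (1\<^sub>m n :: 'a::field mat) = 1\<^sub>m n"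
  by (rule eq_matI) (auto simp: mat_qpow_def)

lemma inv_cancel_mat: "A \<in> carrier_mat n n \<Longrightarrow> B \<in> carrier_mat n n \<Longrightarrow> A * B = 1\<^sub>m n \<Longrightarrow>
   X \<in> carrier_mat n k \<Longrightarrow> A * (B * X) = (X :: 'a::field mat)"
  using assoc_mult_mat[of A n n B n X k] by simp

lemma inv_cancel_vec: "A \<in> carrier_mat n n \<Longrightarrow> B \<in> carrier_mat n n \<Longrightarrow> A * B = 1\<^sub>m n \<Longrightarrow>
   x \<in> carrier_vec n \<Longrightarrow> A *\<^sub>v (B *\<^sub>v x) = (x :: 'a::field vec)"
  using assoc_mult_mat_vec[of A n n B n x] by simp

lemma Delta_carrier[simp]: "Delta n a \<in> carrier_mat n n"
  by (simp add: Delta_def)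

lemma Delta_entry: "i < n \<Longrightarrow> j < n \<Longrightarrow> Delta n a $$ (i, j) = (if j = n - 1 then a i else if i = j + 1 then 1 else 0)"
  by (simp add: Delta_def)

lemma Delta_mult:
  assumes Z: "Z \<in> carrier_vec n" and i: "i < n"
  shows "(Delta n a *\<^sub>v Z) $ i = (if i = 0 then 0 else Z $ (i - 1)) + a i * Z $ (n - 1)"
proof -
  have "(Delta n a *\<^sub>v Z) $ i = (\<Sum>j<n. Delta n a $$ (i, j) * Z $ j)"
    using Z i by (intro mv_sum) auto
  also have "\<dots> = (\<Sum>j<n. (if j = n - 1 then a i * Z $ (n - 1) else 0) + (if j = i - 1 then (if i = 0 then 0 else Z $ (i - 1)) else 0))"
    using i by (intro sum.cong refl) (auto simp: Delta_entry)
  also have "\<dots> = a i * Z $ (n - 1) + (if i = 0 then 0 else Z $ (i - 1))"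
    using i by (simp add: sum.distrib)
  finally show ?thesis by simp
qed

lemma Delta_row0:
  assumes "n > 0" "a 0 = 0" "j < n"
  shows "Delta n a $$ (0, j) = 0"
  using assms by (simp add: Delta_entry)




theorem corollary4p5:
  fixes K :: "'a::alg_closed_field set" and p m q n :: nat
    and B N Ninv :: "'a mat" and a :: "nat \<Rightarrow> 'a"
  assumes "is_subfield K" and "infinite K"
    and "prime p" and "CHAR('a) = p" and "m \<ge> 1" and "q = p ^ m"
    and "{x. x ^ q = x} \<subseteq> K"
    and "B \<in> carrier_mat n n" and "elements_mat B \<subseteq> K" and "invertible_mat B"
    and "N \<in> carrier_mat n n" and "elements_mat N \<subseteq> K" and "invertible_mat N"
    and "Ninv \<in> carrier_mat n n" and "Ninv * N = 1\<^sub>m n"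
    and "\<forall>i<n. a i \<in> K"
    and "Ninv * B * mat_qpow q N = Delta n a"
  shows "system_splitting_field K q n B = poly_splitting_field K (add_poly q n a)"
proof (cases "n = 0")
  case True
  have "{X $ i | X i. X \<in> carrier_vec n \<and> (\<forall>j<n. X $ j \<in> sep_closure K) \<and>
          B *\<^sub>v vec_qpow q X = X \<and> i < n} = {}" (is "?S = {}") using True by auto
  have 1: "system_splitting_field K q n B = gen_field K"
    unfolding system_splitting_field_def \<open>?S = {}\<close> by simp
  have "poly (add_poly q n a) y = y" for y using True by (simp add: add_poly_def poly_monom)
  hence "{y. y \<in> sep_closure K \<and> poly (add_poly q n a) y = 0} \<subseteq> K"
    using assms(1) by (auto simp: sf_0)
  hence "K \<union> {y. y \<in> sep_closure K \<and> poly (add_poly q n a) y = 0} = K" by blast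
  hence "poly_splitting_field K (add_poly q n a) = gen_field K" by (simp add: poly_splitting_field_def)
  with 1 show ?thesis by simp
next
  case False
  hence n: "n > 0" by simp
  note Bc = assms(8) and Nc = assms(11) and Nic = assms(14)
  have pc: "prime CHAR('a)" using assms(3,4) by simp
  have qc: "q = CHAR('a) ^ m" using assms(4,6) by simp
  have qpos: "q > 0" using assms(3,6) prime_gt_0_nat by simp
  have NNi: "N * Ninv = 1\<^sub>m n" by (rule mat_mult_left_right_inverse[OF Nic Nc assms(15)])
  have Nqc: "mat_qpow q N \<in> carrier_mat n n" using Nc by simp
  have Niqc: "mat_qpow q Ninv \<in> carrier_mat n n" using Nic by simp
  have NqNiq: "mat_qpow q N * mat_qpow q Ninv = 1\<^sub>m n"
  proof -
    have "mat_qpow q N * mat_qpow q Ninv = mat_qpow q (N * Ninv)"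
      using mat_qpow_mult[OF pc qc Nc Nic] by simp
    also have "\<dots> = 1\<^sub>m n" unfolding NNi by (rule mat_qpow_one[OF qpos])
    finally show ?thesis .
  qed
  define D where "D = Delta n a"
  have Dc: "D \<in> carrier_mat n n" by (simp add: D_def)
  have Deq: "D = Ninv * (B * mat_qpow q N)"
    using assms(17) Nic Bc Nqc by (simp add: D_def)
  have a0: "a 0 \<noteq> 0"
  proof
    assume a00: "a 0 = 0"
    obtain Bi where Bi2: "inverts_mat B Bi \<and> inverts_mat Bi B" using assms(10) unfolding invertible_mat_def by blast
    hence Bi: "inverts_mat B Bi" by blast
    hence BBi: "B * Bi = 1\<^sub>m n" using Bc by (simp add: inverts_mat_def)
    have Bic: "Bi \<in> carrier_mat n n"
    proof -
      have "dim_col (B * Bi) = n" using BBi by simp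
      moreover have "dim_col B = n" using Bc by simp
      ultimately have "dim_col Bi = n" by simp
      moreover have "dim_row Bi = n"
      proof -
        have "inverts_mat Bi B" using Bi2 by blast
        hence "Bi * B = 1\<^sub>m (dim_row Bi)" by (simp add: inverts_mat_def)
        hence "dim_col (Bi * B) = dim_row Bi" by simp
        thus ?thesis using Bc by simp
      qed
      ultimately show ?thesis by auto
    qed
    define M2 where "M2 = mat_qpow q Ninv * (Bi * N)"
    have M2c: "M2 \<in> carrier_mat n n" using Niqc Bic Nc by (simp add: M2_def)
    have "D * M2 = Ninv * (B * (mat_qpow q N * (mat_qpow q Ninv * (Bi * N))))"
    proof -
      have BNq: "B * mat_qpow q N \<in> carrier_mat n n" using Bc Nqc by simp
      have "D * M2 = Ninv * ((B * mat_qpow q N) * M2)" unfolding Deq by (rule assoc_mult_mat[OF Nic BNq M2c])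
      also have "(B * mat_qpow q N) * M2 = B * (mat_qpow q N * M2)" by (rule assoc_mult_mat[OF Bc Nqc M2c])
      finally show ?thesis by (simp add: M2_def)
    qed
    also have "mat_qpow q N * (mat_qpow q Ninv * (Bi * N)) = Bi * N"
      by (rule inv_cancel_mat[OF Nqc Niqc NqNiq, of _ n]) (use Bic Nc in simp)
    also have "B * (Bi * N) = N" by (rule inv_cancel_mat[OF Bc Bic BBi Nc])
    finally have "D * M2 = 1\<^sub>m n" using assms(15) by simp
    hence "(D * M2) $$ (0, 0) = 1" using n by simp
    moreover have "(D * M2) $$ (0, 0) = 0"
      using n Dc M2c by (subst mm_sum[OF Dc M2c]) (auto simp: D_def Delta_row0[of n a, OF n a00])
    ultimately show False by simp
  qed
  interpret frob K p m q n a
    by unfold_locales (use assms n a0 in auto)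
  have T1: "sol (\<lambda>j. (Ninv *\<^sub>v X) $ j)" if X: "X \<in> carrier_vec n" "B *\<^sub>v vec_qpow q X = X" for X
  proof -
    define Y where "Y = Ninv *\<^sub>v X"
    have Yc: "Y \<in> carrier_vec n" using Nic X by (simp add: Y_def)
    have Xqc: "vec_qpow q X \<in> carrier_vec n" using X by simp
    have Vc: "mat_qpow q Ninv *\<^sub>v vec_qpow q X \<in> carrier_vec n" using Niqc Xqc by simp
    have BNq: "B * mat_qpow q N \<in> carrier_mat n n" using Bc Nqc by simp
    have "D *\<^sub>v vec_qpow q Y = (Ninv * (B * mat_qpow q N)) *\<^sub>v (mat_qpow q Ninv *\<^sub>v vec_qpow q X)"
      unfolding Deq Y_def vec_qpow_mult[OF pc qc Nic X(1)] ..
    also have "\<dots> = Ninv *\<^sub>v ((B * mat_qpow q N) *\<^sub>v (mat_qpow q Ninv *\<^sub>v vec_qpow q X))"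
      by (rule assoc_mult_mat_vec[OF Nic BNq Vc])
    also have "(B * mat_qpow q N) *\<^sub>v (mat_qpow q Ninv *\<^sub>v vec_qpow q X) = B *\<^sub>v (mat_qpow q N *\<^sub>v (mat_qpow q Ninv *\<^sub>v vec_qpow q X))"
      by (rule assoc_mult_mat_vec[OF Bc Nqc Vc])
    also have "mat_qpow q N *\<^sub>v (mat_qpow q Ninv *\<^sub>v vec_qpow q X) = vec_qpow q X"
      by (rule inv_cancel_vec[OF Nqc Niqc NqNiq Xqc])
    finally have DY: "D *\<^sub>v vec_qpow q Y = Y" using X(2) by (simp add: Y_def)
    show ?thesis unfolding sol_def
    proof (intro allI impI)
      fix i assume i: "i < n"
      have "Y $ i = (D *\<^sub>v vec_qpow q Y) $ i" using DY by simp
      also have "\<dots> = (if i = 0 then 0 else vec_qpow q Y $ (i - 1)) + a i * vec_qpow q Y $ (n - 1)"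
        unfolding D_def by (rule Delta_mult) (use Yc i in auto)
      also have "\<dots> = (if i = 0 then 0 else (Y $ (i - 1)) ^ q) + a i * (Y $ (n - 1)) ^ q"
        using Yc i n by (auto simp: vec_qpow_def)
      finally show "(Ninv *\<^sub>v X) $ i = (if i = 0 then 0 else ((Ninv *\<^sub>v X) $ (i - 1)) ^ q) + a i * ((Ninv *\<^sub>v X) $ (n - 1)) ^ q"
        by (simp add: Y_def)
    qed
  qed
  have T2: "B *\<^sub>v vec_qpow q (N *\<^sub>v vec n Y) = N *\<^sub>v vec n Y" if Y: "sol Y" for Y
  proof -
    define Yv where "Yv = vec n Y"
    have Yvc: "Yv \<in> carrier_vec n" by (simp add: Yv_def)
    have Yqc: "vec_qpow q Yv \<in> carrier_vec n" using Yvc by simp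
    have DY: "D *\<^sub>v vec_qpow q Yv = Yv"
    proof (rule eq_vecI)
      fix i assume "i < dim_vec Yv"
      hence i: "i < n" by (simp add: Yv_def)
      have "(D *\<^sub>v vec_qpow q Yv) $ i = (if i = 0 then 0 else vec_qpow q Yv $ (i - 1)) + a i * vec_qpow q Yv $ (n - 1)"
        unfolding D_def by (rule Delta_mult[OF Yqc i])
      also have "\<dots> = (if i = 0 then 0 else Y (i - 1) ^ q) + a i * Y (n - 1) ^ q"
        using i n by (auto simp: vec_qpow_def Yv_def)
      also have "\<dots> = Y i" using Y i unfolding sol_def by metis
      finally show "(D *\<^sub>v vec_qpow q Yv) $ i = Yv $ i" using i by (simp add: Yv_def)
    qed (use Dc in \<open>simp add: Yv_def\<close>)
    have ND: "N * D = B * mat_qpow q N"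
      unfolding Deq by (rule inv_cancel_mat[OF Nc Nic NNi, of _ n]) (use Bc Nqc in simp)
    have "B *\<^sub>v vec_qpow q (N *\<^sub>v Yv) = B *\<^sub>v (mat_qpow q N *\<^sub>v vec_qpow q Yv)"
      by (simp add: vec_qpow_mult[OF pc qc Nc Yvc])
    also have "\<dots> = (B * mat_qpow q N) *\<^sub>v vec_qpow q Yv"
      using Bc Nqc Yqc by simp
    also have "\<dots> = (N * D) *\<^sub>v vec_qpow q Yv" by (simp add: ND)
    also have "\<dots> = N *\<^sub>v (D *\<^sub>v vec_qpow q Yv)" using Nc Dc Yqc by simp
    finally show ?thesis using DY by (simp add: Yv_def)
  qed

  have NK: "N $$ (i, j) \<in> K" if "i < n" "j < n" for i j
    using assms(12) elements_matI[OF Nc that refl] by blast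
  define F1 where "F1 = system_splitting_field K q n B"
  define F2 where "F2 = poly_splitting_field K (add_poly q n a)"
  have F1sf: "is_subfield F1" by (simp add: F1_def system_splitting_field_def gen_field_sf)
  have F2sf: "is_subfield F2" by (simp add: F2_def poly_splitting_field_def gen_field_sf)
  have KF1: "K \<subseteq> F1" unfolding F1_def system_splitting_field_def by (rule subset_trans[OF Un_upper1 gen_field_sub])
  have KF2: "K \<subseteq> F2" unfolding F2_def poly_splitting_field_def by (rule subset_trans[OF Un_upper1 gen_field_sub])
  have rootF2: "v \<in> F2" if "poly (add_poly q n a) v = 0" for v
    unfolding F2_def poly_splitting_field_def
    by (rule subsetD[OF gen_field_sub], rule UnI2) (use roots_f_sep[OF that] that in blast)
  have solF1: "X $ i \<in> F1" if "X \<in> carrier_vec n" "\<forall>j<n. X $ j \<in> sep_closure K"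
    "B *\<^sub>v vec_qpow q X = X" "i < n" for X i
    unfolding F1_def system_splitting_field_def
    by (rule subsetD[OF gen_field_sub], rule UnI2) (use that in blast)
  have sub1: "F1 \<subseteq> F2"
    unfolding F1_def system_splitting_field_def
  proof (rule gen_field_min[OF F2sf], intro Un_least KF2 subsetI)
    fix x assume "x \<in> {X $ i | X i. X \<in> carrier_vec n \<and> (\<forall>j<n. X $ j \<in> sep_closure K) \<and>
                                   B *\<^sub>v vec_qpow q X = X \<and> i < n}"
    then obtain X i where X: "X \<in> carrier_vec n" "B *\<^sub>v vec_qpow q X = X" "i < n" and x: "x = X $ i"
      by blast
    define Y where "Y = Ninv *\<^sub>v X"
    have Yc: "Y \<in> carrier_vec n" using Nic X by (simp add: Y_def)
    have solY: "sol (\<lambda>j. Y $ j)" unfolding Y_def by (rule T1[OF X(1,2)])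
    define R where "R = {((\<lambda>i. v ^ (q ^ i)), (\<Sum>i<n. v ^ (q ^ i) * Y $ i)) | v. poly (add_poly q n a) v = 0}"
    have "\<forall>k<n. Y $ k \<in> F2"
    proof (rule unique_descent[OF F2sf, of R n "\<lambda>j. Y $ j"])
      show "\<forall>(r, b)\<in>R. (\<forall>k<n. r k \<in> F2) \<and> b \<in> F2"
      proof (intro ballI, clarify)
        fix r b assume "(r, b) \<in> R"
        then obtain v where v: "poly (add_poly q n a) v = 0" "r = (\<lambda>i. v ^ (q ^ i))"
          "b = (\<Sum>i<n. v ^ (q ^ i) * Y $ i)" unfolding R_def by blast
        have "b ^ q = b" unfolding v(3) by (rule pairing[OF v(1) solY])
        hence "b \<in> F2" using KF2 Fq_K by blast
        moreover have "\<forall>k<n. r k \<in> F2" using v rootF2 F2sf by (auto intro: sf_power)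
        ultimately show "(\<forall>k<n. r k \<in> F2) \<and> b \<in> F2" by blast
      qed
      show "\<forall>(r, b)\<in>R. (\<Sum>k<n. r k * Y $ k) = b" unfolding R_def by auto
      fix y assume H: "\<forall>(r, b)\<in>R. (\<Sum>k<n. r k * y k) = 0"
      show "\<forall>k<n. y k = 0"
      proof (rule S1, intro allI impI)
        fix v assume v: "poly (add_poly q n a) v = 0"
        hence mem: "((\<lambda>i. v ^ (q ^ i)), (\<Sum>i<n. v ^ (q ^ i) * Y $ i)) \<in> R" unfolding R_def by blast
        have "(\<Sum>k<n. v ^ (q ^ k) * y k) = 0" using bspec[OF H mem] by simp
        thus "(\<Sum>i<n. y i * v ^ (q ^ i)) = 0" by (simp add: mult.commute)
      qed
    qed
    have "X = N *\<^sub>v Y" unfolding Y_def by (rule inv_cancel_vec[OF Nc Nic NNi X(1), symmetric])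
    hence "X $ i = (\<Sum>j<n. N $$ (i, j) * Y $ j)" using mv_sum[OF Nc Yc X(3)] by simp
    also have "\<dots> \<in> F2" using \<open>\<forall>k<n. Y $ k \<in> F2\<close> NK X(3) KF2 F2sf
      by (intro sf_sum sf_mult) auto
    finally show "x \<in> F2" using x by simp
  qed
  have sub2: "F2 \<subseteq> F1"
    unfolding F2_def poly_splitting_field_def
  proof (rule gen_field_min[OF F1sf], intro Un_least KF1 subsetI)
    fix v assume "v \<in> {y. y \<in> sep_closure K \<and> poly (add_poly q n a) y = 0}"
    hence v: "poly (add_poly q n a) v = 0" by blast
    define w where "w i = v ^ (q ^ i)" for i
    define SolX where "SolX = {X. X \<in> carrier_vec n \<and> (\<forall>j<n. X $ j \<in> sep_closure K) \<and> B *\<^sub>v vec_qpow q X = X}"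
    define R where "R = {((\<lambda>j. X $ j), (\<Sum>i<n. w i * (Ninv *\<^sub>v X) $ i)) | X. X \<in> SolX}"
    define x where "x j = (\<Sum>i<n. w i * Ninv $$ (i, j))" for j
    have "\<forall>k<n. x k \<in> F1"
    proof (rule unique_descent[OF F1sf, of R n x])
      show "\<forall>(r, b)\<in>R. (\<forall>k<n. r k \<in> F1) \<and> b \<in> F1"
      proof (intro ballI, clarify)
        fix r b assume "(r, b) \<in> R"
        then obtain X where X: "X \<in> SolX" "r = (\<lambda>j. X $ j)" "b = (\<Sum>i<n. w i * (Ninv *\<^sub>v X) $ i)"
          unfolding R_def by blast
        have "sol (\<lambda>j. (Ninv *\<^sub>v X) $ j)" using X(1) T1 by (auto simp: SolX_def)
        hence "b ^ q = b" unfolding X(3) w_def by (rule pairing[OF v])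
        hence "b \<in> F1" using KF1 Fq_K by blast
        moreover have "\<forall>k<n. r k \<in> F1" using X solF1 by (auto simp: SolX_def)
        ultimately show "(\<forall>k<n. r k \<in> F1) \<and> b \<in> F1" by blast
      qed
      show "\<forall>(r, b)\<in>R. (\<Sum>k<n. r k * x k) = b"
      proof (intro ballI, clarify)
        fix r b assume "(r, b) \<in> R"
        then obtain X where X: "X \<in> SolX" "r = (\<lambda>j. X $ j)" "b = (\<Sum>i<n. w i * (Ninv *\<^sub>v X) $ i)"
          unfolding R_def by blast
        have Xc: "X \<in> carrier_vec n" using X(1) by (simp add: SolX_def)
        have "(\<Sum>k<n. X $ k * x k) = (\<Sum>k<n. \<Sum>i<n. X $ k * (w i * Ninv $$ (i, k)))"
          by (simp add: x_def sum_distrib_left)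
        also have "\<dots> = (\<Sum>i<n. \<Sum>k<n. X $ k * (w i * Ninv $$ (i, k)))" by (rule sum.swap)
        also have "\<dots> = (\<Sum>i<n. w i * (\<Sum>k<n. Ninv $$ (i, k) * X $ k))"
          by (simp add: sum_distrib_left mult_ac)
        also have "\<dots> = (\<Sum>i<n. w i * (Ninv *\<^sub>v X) $ i)"
          using mv_sum[OF Nic Xc] by simp
        finally show "(\<Sum>k<n. r k * x k) = b" using X by simp
      qed
      fix y assume H: "\<forall>(r, b)\<in>R. (\<Sum>k<n. r k * y k) = 0"
      define z where "z k = (\<Sum>j<n. N $$ (j, k) * y j)" for k
      have "\<forall>k<n. z k = 0"
      proof (rule S2, intro allI impI)
        fix u assume u: "poly G u = 0"
        define X where "X = N *\<^sub>v vec n (Yr u)"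
        have Xc: "X \<in> carrier_vec n" using Nc by (simp add: X_def)
        have Xj: "X $ j = (\<Sum>k<n. N $$ (j, k) * Yr u k)" if "j < n" for j
          using mv_sum[OF Nc _ that, of "vec n (Yr u)"] by (simp add: X_def)
        have "X \<in> SolX" unfolding SolX_def
        proof (intro CollectI conjI allI impI)
          show "X \<in> carrier_vec n" by fact
          fix j assume "j < n"
          thus "X $ j \<in> sep_closure K" unfolding Xj[OF \<open>j < n\<close>]
            using NK by (intro sep_lin' sol_Yr[OF u]) auto
        next
          show "B *\<^sub>v vec_qpow q X = X" unfolding X_def by (rule T2[OF sol_Yr[OF u]])
        qed
        hence mem: "((\<lambda>j. X $ j), (\<Sum>i<n. w i * (Ninv *\<^sub>v X) $ i)) \<in> R" unfolding R_def by blast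
        have "(\<Sum>j<n. X $ j * y j) = 0" using bspec[OF H mem] by simp
        also have "(\<Sum>j<n. X $ j * y j) = (\<Sum>j<n. \<Sum>k<n. N $$ (j, k) * Yr u k * y j)"
          by (simp add: Xj sum_distrib_right)
        also have "\<dots> = (\<Sum>k<n. \<Sum>j<n. N $$ (j, k) * Yr u k * y j)" by (rule sum.swap)
        also have "\<dots> = (\<Sum>k<n. z k * Yr u k)"
          by (simp add: z_def sum_distrib_left sum_distrib_right mult_ac)
        finally show "(\<Sum>k<n. z k * Yr u k) = 0" by simp
      qed
      show "\<forall>k<n. y k = 0"
      proof (intro allI impI)
        fix j assume j: "j < n"
        have "(\<Sum>k<n. Ninv $$ (k, j) * z k) = (\<Sum>k<n. \<Sum>l<n. Ninv $$ (k, j) * (N $$ (l, k) * y l))"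
          by (simp add: z_def sum_distrib_left)
        also have "\<dots> = (\<Sum>l<n. \<Sum>k<n. Ninv $$ (k, j) * (N $$ (l, k) * y l))" by (rule sum.swap)
        also have "\<dots> = (\<Sum>l<n. y l * (\<Sum>k<n. N $$ (l, k) * Ninv $$ (k, j)))"
          by (simp add: sum_distrib_left mult_ac)
        also have "\<dots> = (\<Sum>l<n. y l * (N * Ninv) $$ (l, j))"
          using mm_sum[OF Nc Nic _ j] by simp
        also have "\<dots> = (\<Sum>l<n. if l = j then y j else 0)"
          using j by (intro sum.cong refl) (auto simp: NNi)
        also have "\<dots> = y j" using j by simp
        finally show "y j = 0" using \<open>\<forall>k<n. z k = 0\<close> by simp
      qed
    qed
    have "v = w 0" by (simp add: w_def)
    also have "w 0 = (\<Sum>i<n. w i * (Ninv * N) $$ (i, 0))"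
    proof -
      have "(\<Sum>i<n. w i * (Ninv * N) $$ (i, 0)) = (\<Sum>i<n. if i = 0 then w 0 else 0)"
        using n by (intro sum.cong refl) (auto simp: assms(15))
      thus ?thesis using n by simp
    qed
    also have "\<dots> = (\<Sum>i<n. \<Sum>j<n. w i * (Ninv $$ (i, j) * N $$ (j, 0)))"
      using mm_sum[OF Nic Nc _ n] by (simp add: sum_distrib_left)
    also have "\<dots> = (\<Sum>j<n. \<Sum>i<n. w i * (Ninv $$ (i, j) * N $$ (j, 0)))" by (rule sum.swap)
    also have "\<dots> = (\<Sum>j<n. N $$ (j, 0) * x j)"
      by (simp add: x_def sum_distrib_left sum_distrib_right mult_ac)
    also have "\<dots> \<in> F1" using \<open>\<forall>k<n. x k \<in> F1\<close> NK n KF1 F1sf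
      by (intro sf_sum sf_mult) auto
    finally show "v \<in> F1" .
  qed
  from sub1 sub2 show ?thesis by (simp add: F1_def F2_def)
qed


end
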